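(* The set $$S=\{e\in\omega : W_e \text{ is self-constructing}\}$$ is $\Pi^0_2$-complete; that is, $S$ is a $\Pi^0_2$ set and every $\Pi^0_2$ subset of $\omega$ is many-one reducible to $S$. In particular, the set $\mathrm{Tot}=\{e : W_e=\omega\}$ is many-one reducible to $S$.
   Context: $\omega$ denotes the set of natural numbers $\{0,1,2,\dots\}$. $\langle \psi_e : e\in\omega\rangle$ is a standard (acceptable, in the sense of Rogers) computable numbering of all partial computable functions from $\omega$ to $\omega$, and $W_e$ denotes the domain of $\psi_e$. A nonempty computably enumerable set $A\subseteq\omega$ is called self-constructing if $W_e=A$ for every $e\in A$. *)

theory Defs
  imports Main "HOL-Library.Nat_Bijection"
begin

text \<open>A standard model of the partial computable functions: unary mu-recursive
  functions on natural numbers, with pairs coded by the Cantor pairing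
  prod_encode / prod_decode.\<close>

datatype recf =
    Zero
  | Succ
  | Fst
  | Snd
  | Comp recf recf
  | Pair recf recf
  | Rec recf recf
  | Mu recf

inductive eval :: "recf \<Rightarrow> nat \<Rightarrow> nat \<Rightarrow> bool" where
  eval_Zero: "eval Zero x 0"
| eval_Succ: "eval Succ x (Suc x)"
| eval_Fst: "eval Fst x (fst (prod_decode x))"
| eval_Snd: "eval Snd x (snd (prod_decode x))"
| eval_Comp: "eval g x y \<Longrightarrow> eval f y z \<Longrightarrow> eval (Comp f g) x z"
| eval_Pair: "eval f x a \<Longrightarrow> eval g x b \<Longrightarrow> eval (Pair f g) x (prod_encode (a, b))"
| eval_Rec0: "eval f x y \<Longrightarrow> eval (Rec f g) (prod_encode (0, x)) y"
| eval_RecS: "eval (Rec f g) (prod_encode (n, x)) y \<Longrightarrow>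
              eval g (prod_encode (n, prod_encode (y, x))) z \<Longrightarrow>
              eval (Rec f g) (prod_encode (Suc n, x)) z"
| eval_Mu: "eval f (prod_encode (n, x)) 0 \<Longrightarrow>
            (\<forall>m<n. \<exists>v. v \<noteq> 0 \<and> eval f (prod_encode (m, x)) v) \<Longrightarrow>
            eval (Mu f) x n"

primrec enc :: "recf \<Rightarrow> nat" where
  "enc Zero = prod_encode (0, 0)"
| "enc Succ = prod_encode (1, 0)"
| "enc Fst = prod_encode (2, 0)"
| "enc Snd = prod_encode (3, 0)"
| "enc (Comp f g) = prod_encode (4, prod_encode (enc f, enc g))"
| "enc (Pair f g) = prod_encode (5, prod_encode (enc f, enc g))"
| "enc (Rec f g) = prod_encode (6, prod_encode (enc f, enc g))"
| "enc (Mu f) = prod_encode (7, enc f)"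

text \<open>The standard numbering psi_e of the partial computable functions
  (indices that do not code a program denote the empty function).\<close>
definition psi :: "nat \<Rightarrow> nat \<Rightarrow> nat option" where
  "psi e x = (if e \<in> range enc \<and> (\<exists>y. eval (inv enc e) x y)
              then Some (THE y. eval (inv enc e) x y) else None)"

definition W :: "nat \<Rightarrow> nat set" where
  "W e = dom (psi e)"

definition total_computable :: "(nat \<Rightarrow> nat) \<Rightarrow> bool" where
  "total_computable f \<longleftrightarrow> (\<exists>c. \<forall>x. eval c x (f x))"

definition computable_set :: "nat set \<Rightarrow> bool" where
  "computable_set R \<longleftrightarrow> total_computable (\<lambda>x. if x \<in> R then 1 else 0)"

definition Pi02 :: "nat set \<Rightarrow> bool" where
  "Pi02 A \<longleftrightarrow> (\<exists>R. computable_set R \<and>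
      (\<forall>x. x \<in> A \<longleftrightarrow> (\<forall>y. \<exists>z. prod_encode (x, prod_encode (y, z)) \<in> R)))"

definition m_reducible :: "nat set \<Rightarrow> nat set \<Rightarrow> bool" where
  "m_reducible A B \<longleftrightarrow> (\<exists>f. total_computable f \<and> (\<forall>x. x \<in> A \<longleftrightarrow> f x \<in> B))"

definition ce_set :: "nat set \<Rightarrow> bool" where
  "ce_set A \<longleftrightarrow> (\<exists>e. W e = A)"

definition self_constructing :: "nat set \<Rightarrow> bool" where
  "self_constructing A \<longleftrightarrow> A \<noteq> {} \<and> ce_set A \<and> (\<forall>e\<in>A. W e = A)"

definition Tot :: "nat set" where
  "Tot = {e. W e = UNIV}"

end

theory Submission
  imports Defs
begin

abbreviation pe :: "nat \<Rightarrow> nat \<Rightarrow> nat" where "pe a b \<equiv> prod_encode (a, b)"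
abbreviation p1 :: "nat \<Rightarrow> nat" where "p1 x \<equiv> fst (prod_decode x)"
abbreviation p2 :: "nat \<Rightarrow> nat" where "p2 x \<equiv> snd (prod_decode x)"

lemma pe_p: "pe (p1 x) (p2 x) = x"
  by (metis prod.collapse prod_decode_inverse)

inductive_cases ZeroE: "eval Zero x y"
inductive_cases SuccE: "eval Succ x y"
inductive_cases FstE: "eval Fst x y"
inductive_cases SndE: "eval Snd x y"
inductive_cases CompE: "eval (Comp f g) x y"
inductive_cases PairE: "eval (recf.Pair f g) x y"
inductive_cases RecE: "eval (Rec f g) x y"
inductive_cases MuE: "eval (Mu f) x y"

lemma eval_det: "eval f x y \<Longrightarrow> eval f x y' \<Longrightarrow> y' = y"
proof (induction arbitrary: y' rule: eval.induct)
  case (eval_Zero x) then show ?case by (rule ZeroE) simp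
next
  case (eval_Succ x) then show ?case by (rule SuccE) simp
next
  case (eval_Fst x) then show ?case by (rule FstE) simp
next
  case (eval_Snd x) then show ?case by (rule SndE) simp
next
  case (eval_Comp g x y f z)
  from eval_Comp.prems obtain w where "eval g x w" "eval f w y'" by (rule CompE)
  then show ?case using eval_Comp.IH by metis
next
  case (eval_Pair f x a g b)
  from eval_Pair.prems obtain a' b' where "eval f x a'" "eval g x b'" "y' = pe a' b'" by (rule PairE)
  then show ?case using eval_Pair.IH by metis
next
  case (eval_Rec0 f x y g)
  from eval_Rec0.prems show ?case
  proof (rule RecE)
    fix x0 assume "pe 0 x = pe 0 x0" "eval f x0 y'"
    then show ?thesis using eval_Rec0.IH by simp
  next
    fix n x0 w assume "pe 0 x = pe (Suc n) x0"
    then show ?thesis by simp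
  qed
next
  case (eval_RecS f g n x y z)
  from eval_RecS.prems show ?case
  proof (rule RecE)
    fix x0 assume "pe (Suc n) x = pe 0 x0"
    then show ?thesis by simp
  next
    fix n' x0 w assume h: "pe (Suc n) x = pe (Suc n') x0" "eval (Rec f g) (pe n' x0) w"
      "eval g (pe n' (pe w x0)) y'"
    from h(1) have "n' = n" "x0 = x" by simp_all
    with h eval_RecS.IH show ?thesis by metis
  qed
next
  case (eval_Mu f n x)
  from eval_Mu.prems show ?case
  proof (rule MuE)
    assume h1: "eval f (pe y' x) 0" and h2: "\<forall>m<y'. \<exists>v>0. eval f (pe m x) v"
    show ?thesis
    proof (rule ccontr)
      assume "y' \<noteq> n"
      then consider "y' < n" | "n < y'" by linarith
      then show False
      proof cases
        case 1
        then obtain v where "v \<noteq> 0" "eval f (pe y' x) v" "\<And>v'. eval f (pe y' x) v' \<Longrightarrow> v' = v"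
          using eval_Mu.IH(2) by blast
        with h1 show False by blast
      next
        case 2
        then obtain v where "v > 0" "eval f (pe n x) v" using h2 by blast
        with eval_Mu.IH(1) show False by blast
      qed
    qed
  qed
qed

definition cmp :: "(nat \<Rightarrow> nat) \<Rightarrow> bool" where
  "cmp f \<longleftrightarrow> (\<exists>c. \<forall>x. eval c x (f x))"

lemma comp_tc: "cmp f = total_computable f" by (simp add: cmp_def total_computable_def)

named_theorems cr

lemma comp_id[cr]: "cmp (\<lambda>x. x)"
proof -
  have "eval (Pair Fst Snd) x x" for x
    using eval_Pair[OF eval_Fst eval_Snd, of x] by (simp add: pe_p)
  then show ?thesis unfolding cmp_def by blast
qed

primrec konst :: "nat \<Rightarrow> recf" where
  "konst 0 = Zero" | "konst (Suc n) = Comp Succ (konst n)"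

lemma eval_konst: "eval (konst n) x n"
  by (induction n) (auto intro: eval.intros)

lemma comp_const[cr]: "cmp (\<lambda>x. c)"
  unfolding cmp_def using eval_konst by blast

lemma comp_compose: "cmp f \<Longrightarrow> cmp g \<Longrightarrow> cmp (\<lambda>x. f (g x))"
  unfolding cmp_def by (blast intro: eval_Comp)

lemma comp_pe[cr]: "cmp f \<Longrightarrow> cmp g \<Longrightarrow> cmp (\<lambda>x. pe (f x) (g x))"
  unfolding cmp_def by (blast intro: eval_Pair)

lemma comp_p1[cr]: "cmp f \<Longrightarrow> cmp (\<lambda>x. p1 (f x))"
  unfolding cmp_def by (blast intro: eval_Comp eval_Fst)

lemma comp_p2[cr]: "cmp f \<Longrightarrow> cmp (\<lambda>x. p2 (f x))"
  unfolding cmp_def by (blast intro: eval_Comp eval_Snd)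

lemma comp_Suc[cr]: "cmp f \<Longrightarrow> cmp (\<lambda>x. Suc (f x))"
  unfolding cmp_def by (blast intro: eval_Comp eval_Succ)

lemma eval_Rec_gen:
  assumes "\<And>x. eval F x (f x)" "\<And>v. eval G v (g v)"
  shows "eval (Rec F G) (pe n x) (rec_nat (f x) (\<lambda>k y. g (pe k (pe y x))) n)"
  by (induction n) (auto intro: eval.intros assms)

lemma comp_rec:
  assumes "cmp f" "cmp g"
  shows "cmp (\<lambda>z. rec_nat (f (p2 z)) (\<lambda>k y. g (pe k (pe y (p2 z)))) (p1 z))"
proof -
  obtain F G where "\<And>x. eval F x (f x)" "\<And>v. eval G v (g v)" using assms unfolding cmp_def by blast
  from eval_Rec_gen[OF this] have "eval (Rec F G) z (rec_nat (f (p2 z)) (\<lambda>k y. g (pe k (pe y (p2 z)))) (p1 z))" for z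
    by (metis pe_p)
  then show ?thesis unfolding cmp_def by blast
qed

lemma comp_rec2:
  assumes "cmp f" "cmp g" "cmp a" "cmp b"
  shows "cmp (\<lambda>w. rec_nat (f (b w)) (\<lambda>k y. g (pe k (pe y (b w)))) (a w))"
  using comp_compose[OF comp_rec[OF assms(1,2)] comp_pe[OF assms(3,4)]] by simp

lemma comp_ifz[cr]:
  assumes "cmp c" "cmp g" "cmp h"
  shows "cmp (\<lambda>x. if c x = 0 then h x else g x)"
proof -
  have "cmp (\<lambda>x. rec_nat (h x) (\<lambda>k y. (\<lambda>v. g (p2 (p2 v))) (pe k (pe y x))) (c x))"
    by (rule comp_rec2[where b="\<lambda>x. x"]) (auto intro!: cr assms comp_compose[OF assms(2)])
  moreover have "rec_nat (h x) (\<lambda>k y. (\<lambda>v. g (p2 (p2 v))) (pe k (pe y x))) n = (if n = 0 then h x else g x)" for x n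
    by (cases n) auto
  ultimately show ?thesis by simp
qed

lemma comp_add[cr]:
  assumes "cmp f" "cmp g" shows "cmp (\<lambda>x. f x + g x)"
proof -
  have h: "cmp (\<lambda>v. Suc (p1 (p2 v)))" by (intro cr)
  have "cmp (\<lambda>x. rec_nat (f x) (\<lambda>k y. Suc y) (g x))"
    using comp_rec2[OF comp_id h assms(2) assms(1)] by simp
  moreover have "rec_nat a (\<lambda>k y. Suc y) n = a + n" for a n
    by (induction n) auto
  ultimately show ?thesis by simp
qed

lemma comp_pred1: "cmp (\<lambda>x. x - 1)"
proof -
  have h: "cmp (\<lambda>v. p1 v)" by (intro cr)
  have "cmp (\<lambda>x. rec_nat 0 (\<lambda>k y. k) x)"
    using comp_rec2[OF comp_const h comp_id comp_id] by simp
  moreover have "rec_nat 0 (\<lambda>k y. k) n = n - 1" for n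
    by (cases n) auto
  ultimately show ?thesis by simp
qed

lemma comp_diff[cr]:
  assumes "cmp f" "cmp g" shows "cmp (\<lambda>x. f x - g x)"
proof -
  have h: "cmp (\<lambda>v. p1 (p2 v) - 1)" by (rule comp_compose[OF comp_pred1]) (intro cr)
  have "cmp (\<lambda>x. rec_nat (f x) (\<lambda>k y. y - 1) (g x))"
    using comp_rec2[OF comp_id h assms(2) assms(1)] by simp
  moreover have "rec_nat a (\<lambda>k y. y - 1) n = a - n" for a n
    by (induction n) auto
  ultimately show ?thesis by simp
qed

definition cpred :: "(nat \<Rightarrow> bool) \<Rightarrow> bool" where
  "cpred P \<longleftrightarrow> cmp (\<lambda>x. if P x then 1 else 0)"

lemma comp_if[cr]:
  assumes "cpred P" "cmp g" "cmp h"
  shows "cmp (\<lambda>x. if P x then g x else h x)"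
proof -
  have "cmp (\<lambda>x. if (\<lambda>x. if P x then 1 else (0::nat)) x = 0 then h x else g x)"
    using comp_ifz[OF assms[unfolded cpred_def]] by simp
  moreover have "(\<lambda>x. if (\<lambda>x. if P x then 1 else (0::nat)) x = 0 then h x else g x) = (\<lambda>x. if P x then g x else h x)"
    by auto
  ultimately show ?thesis by simp
qed

lemma cpred_I: "cmp f \<Longrightarrow> (\<And>x. P x \<longleftrightarrow> f x \<noteq> 0) \<Longrightarrow> cpred P"
proof -
  assume f: "cmp f" and P: "\<And>x. P x \<longleftrightarrow> f x \<noteq> 0"
  have "cmp (\<lambda>x. if f x = 0 then 0 else 1)" by (rule comp_ifz[OF f comp_const comp_const])
  moreover have "(\<lambda>x. if f x = 0 then 0 else 1) = (\<lambda>x. if P x then 1 else (0::nat))" using P by auto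
  ultimately show ?thesis unfolding cpred_def by simp
qed

lemma cpred_eq[cr]: assumes "cmp f" "cmp g" shows "cpred (\<lambda>x. f x = g x)"
proof (rule cpred_I[where f="\<lambda>x. if (f x - g x) + (g x - f x) = 0 then 1 else 0"])
  show "cmp (\<lambda>x. if (f x - g x) + (g x - f x) = 0 then 1 else 0)"
    by (intro comp_ifz comp_add comp_diff comp_const assms)
qed auto

lemma cpred_le[cr]: assumes "cmp f" "cmp g" shows "cpred (\<lambda>x. f x \<le> g x)"
proof (rule cpred_I[where f="\<lambda>x. if (f x - g x) = 0 then 1 else 0"])
  show "cmp (\<lambda>x. if (f x - g x) = 0 then 1 else 0)"
    by (intro comp_ifz comp_add comp_diff comp_const assms)
qed auto

lemma cpred_less[cr]: "cmp f \<Longrightarrow> cmp g \<Longrightarrow> cpred (\<lambda>x. f x < g x)"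
  by (rule cpred_I[where f="\<lambda>x. g x - f x"]) (auto intro!: comp_diff)

lemma cpred_not[cr]: "cpred P \<Longrightarrow> cpred (\<lambda>x. \<not> P x)"
  by (rule cpred_I[where f="\<lambda>x. if P x then 0 else 1"]) (auto intro!: cr)

lemma cpred_and[cr]: "cpred P \<Longrightarrow> cpred Q \<Longrightarrow> cpred (\<lambda>x. P x \<and> Q x)"
  by (rule cpred_I[where f="\<lambda>x. if P x then (if Q x then 1 else 0) else 0"]) (auto intro!: cr)

lemma cpred_or[cr]: "cpred P \<Longrightarrow> cpred Q \<Longrightarrow> cpred (\<lambda>x. P x \<or> Q x)"
  by (rule cpred_I[where f="\<lambda>x. if P x then 1 else (if Q x then 1 else 0)"]) (auto intro!: cr)

lemma cpred_imp[cr]: "cpred P \<Longrightarrow> cpred Q \<Longrightarrow> cpred (\<lambda>x. P x \<longrightarrow> Q x)"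
  by (rule cpred_I[where f="\<lambda>x. if P x then (if Q x then 1 else 0) else 1"]) (auto intro!: cr)

lemma cpred_const[cr]: "cpred (\<lambda>x. b)"
  unfolding cpred_def by (rule comp_const)

lemma cpred_bex[cr]:
  assumes "cpred (\<lambda>z. P (p1 z) (p2 z))" "cmp b"
  shows "cpred (\<lambda>x. \<exists>i<b x. P x i)"
proof -
  let ?c = "\<lambda>z. if P (p1 z) (p2 z) then 1 else 0::nat"
  have c: "cmp ?c" using assms(1) unfolding cpred_def .
  have "cmp (\<lambda>x. rec_nat ((\<lambda>_. 0) x) (\<lambda>k y. (\<lambda>v. if p1 (p2 v) = 0 then ?c (pe (p2 (p2 v)) (p1 v)) else 1) (pe k (pe y x))) (b x))"
    by (rule comp_rec2) (auto intro!: cr assms comp_compose[OF c])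
  moreover have "rec_nat 0 (\<lambda>k y. (\<lambda>v. if p1 (p2 v) = 0 then ?c (pe (p2 (p2 v)) (p1 v)) else 1) (pe k (pe y x))) n
      = (if \<exists>i<n. P x i then 1 else 0)" for x n
    by (induction n) (auto simp: less_Suc_eq)
  ultimately show ?thesis unfolding cpred_def by simp
qed

lemma cpred_ball[cr]:
  assumes "cpred (\<lambda>z. P (p1 z) (p2 z))" "cmp b"
  shows "cpred (\<lambda>x. \<forall>i<b x. P x i)"
proof -
  have "cpred (\<lambda>x. \<not> (\<exists>i<b x. \<not> P x i))"
    by (intro cr assms)
  then show ?thesis by simp
qed

lemma cpred_mem: "computable_set R \<Longrightarrow> cmp f \<Longrightarrow> cpred (\<lambda>x. f x \<in> R)"
  unfolding computable_set_def cpred_def comp_tc[symmetric]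
  by (drule comp_compose) auto


definition tri :: "nat \<Rightarrow> nat \<Rightarrow> nat \<Rightarrow> nat" where "tri c x y = pe c (pe x y)"
abbreviation tc :: "nat \<Rightarrow> nat" where "tc v \<equiv> p1 v"
abbreviation tx :: "nat \<Rightarrow> nat" where "tx v \<equiv> p1 (p2 v)"
abbreviation ty :: "nat \<Rightarrow> nat" where "ty v \<equiv> p2 (p2 v)"

lemma tri_simps[simp]: "tc (tri c x y) = c" "tx (tri c x y) = x" "ty (tri c x y) = y"
  by (auto simp: tri_def)

lemma tri_eq[simp]: "tri c x y = tri c' x' y' \<longleftrightarrow> c = c' \<and> x = x' \<and> y = y'"
  by (auto simp: tri_def)

lemma tri_p: "tri (tc v) (tx v) (ty v) = v" by (simp add: tri_def pe_p)

definition JustS :: "nat set \<Rightarrow> nat set \<Rightarrow> nat \<Rightarrow> bool" where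
  "JustS C E v \<longleftrightarrow>
   (p1 (tc v) = 0 \<and> p2 (tc v) = 0 \<and> ty v = 0) \<or>
   (p1 (tc v) = 1 \<and> p2 (tc v) = 0 \<and> ty v = Suc (tx v)) \<or>
   (p1 (tc v) = 2 \<and> p2 (tc v) = 0 \<and> ty v = p1 (tx v)) \<or>
   (p1 (tc v) = 3 \<and> p2 (tc v) = 0 \<and> ty v = p2 (tx v)) \<or>
   (p1 (tc v) = 4 \<and> (\<exists>e\<in>E. tc e = p2 (p2 (tc v)) \<and> tx e = tx v \<and> tri (p1 (p2 (tc v))) (ty e) (ty v) \<in> E)) \<or>
   (p1 (tc v) = 5 \<and> (\<exists>e1\<in>E. \<exists>e2\<in>E. tc e1 = p1 (p2 (tc v)) \<and> tx e1 = tx v \<and>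
        tc e2 = p2 (p2 (tc v)) \<and> tx e2 = tx v \<and> ty v = pe (ty e1) (ty e2))) \<or>
   (p1 (tc v) = 6 \<and> ((p1 (tx v) = 0 \<and> p2 (p2 (tc v)) \<in> C \<and> tri (p1 (p2 (tc v))) (p2 (tx v)) (ty v) \<in> E) \<or>
       (p1 (tx v) \<noteq> 0 \<and> (\<exists>e\<in>E. tc e = tc v \<and> tx e = pe (p1 (tx v) - 1) (p2 (tx v)) \<and>
          tri (p2 (p2 (tc v))) (pe (p1 (tx v) - 1) (pe (ty e) (p2 (tx v)))) (ty v) \<in> E)))) \<or>
   (p1 (tc v) = 7 \<and> tri (p2 (tc v)) (pe (ty v) (tx v)) 0 \<in> E \<and>
       (\<forall>m<ty v. \<exists>e\<in>E. tc e = p2 (tc v) \<and> tx e = pe m (tx v) \<and> ty e \<noteq> 0))"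

definition sem :: "nat \<Rightarrow> bool" where
  "sem v \<longleftrightarrow> tc v \<in> range enc \<and> eval (inv enc (tc v)) (tx v) (ty v)"

lemma inj_enc: "inj enc"
proof
  fix a b show "enc a = enc b \<Longrightarrow> a = b"
    by (induction a arbitrary: b; case_tac b; auto)
qed

lemma inv_enc[simp]: "inv enc (enc P) = P" by (simp add: inj_enc)

lemma sem_tri: "sem (tri (enc P) x y) \<longleftrightarrow> eval P x y"
  by (simp add: sem_def)

lemma semE: "sem (tri c x y) \<Longrightarrow> (\<And>P. c = enc P \<Longrightarrow> eval P x y \<Longrightarrow> thesis) \<Longrightarrow> thesis"
  by (auto simp: sem_def)

lemma sem_ex: "sem e \<Longrightarrow> (\<And>P. tc e = enc P \<Longrightarrow> eval P (tx e) (ty e) \<Longrightarrow> thesis) \<Longrightarrow> thesis"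
  by (auto simp: sem_def)

lemma enc_eq: "pe a b = c \<Longrightarrow> c = pe a b" by simp

lemma sound_step:
  assumes C: "C \<subseteq> range enc" and E: "\<forall>e\<in>E. sem e" and J: "JustS C E v"
  shows "sem v"
proof -
  obtain c x y where v: "v = tri c x y" by (metis tri_p)
  obtain tag a where c: "c = pe tag a" by (metis pe_p)
  obtain cf cg where a: "a = pe cf cg" by (metis pe_p)
  have Es: "\<And>c x y. tri c x y \<in> E \<Longrightarrow> sem (tri c x y)" using E by blast
  have Ee: "\<And>e. e \<in> E \<Longrightarrow> sem (tri (tc e) (tx e) (ty e))" using E by (simp add: tri_p)
  from J consider
     "tag = 0" "a = 0" "y = 0" | "tag = 1" "a = 0" "y = Suc x" | "tag = 2" "a = 0" "y = p1 x"
   | "tag = 3" "a = 0" "y = p2 x"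
   | e where "tag = 4" "e \<in> E" "tc e = cg" "tx e = x" "tri cf (ty e) y \<in> E"
   | e1 e2 where "tag = 5" "e1 \<in> E" "e2 \<in> E" "tc e1 = cf" "tx e1 = x" "tc e2 = cg" "tx e2 = x" "y = pe (ty e1) (ty e2)"
   | "tag = 6" "p1 x = 0" "cg \<in> C" "tri cf (p2 x) y \<in> E"
   | e where "tag = 6" "p1 x \<noteq> 0" "e \<in> E" "tc e = c" "tx e = pe (p1 x - 1) (p2 x)"
        "tri cg (pe (p1 x - 1) (pe (ty e) (p2 x))) y \<in> E"
   | "tag = 7" "tri a (pe y x) 0 \<in> E" "\<forall>m<y. \<exists>e\<in>E. tc e = a \<and> tx e = pe m x \<and> ty e \<noteq> 0"
    unfolding JustS_def v c a by auto
  then show ?thesis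
  proof cases
    case 1 then show ?thesis using sem_tri[of Zero] by (simp add: v c eval_Zero)
  next
    case 2 then show ?thesis using sem_tri[of Succ] by (simp add: v c eval_Succ)
  next
    case 3 then show ?thesis using sem_tri[of Fst] by (simp add: v c eval_Fst)
  next
    case 4 then show ?thesis using sem_tri[of Snd] by (simp add: v c eval_Snd)
  next
    case (5 e)
    from Ee[OF 5(2)] obtain G where G: "cg = enc G" "eval G x (ty e)" using 5 by (auto elim: semE)
    from Es[OF 5(5)] obtain F where F: "cf = enc F" "eval F (ty e) y" by (auto elim: semE)
    have "c = enc (Comp F G)" using c a 5 F G by simp
    then show ?thesis using sem_tri[of "Comp F G"] v eval_Comp[OF G(2) F(2)] by simp
  next
    case (6 e1 e2)
    from Ee[OF 6(2)] obtain F where F: "cf = enc F" "eval F x (ty e1)" using 6 by (auto elim: semE)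
    from Ee[OF 6(3)] obtain G where G: "cg = enc G" "eval G x (ty e2)" using 6 by (auto elim: semE)
    have "c = enc (recf.Pair F G)" using c a 6 F G by simp
    then show ?thesis using sem_tri[of "recf.Pair F G"] v eval_Pair[OF F(2) G(2)] 6 by simp
  next
    case 7
    from Es[OF 7(4)] obtain F where F: "cf = enc F" "eval F (p2 x) y" by (auto elim: semE)
    from C 7(3) obtain G where G: "cg = enc G" by blast
    have "c = enc (Rec F G)" using c a 7 F G by simp
    moreover have "x = pe 0 (p2 x)" using 7(2) by (metis pe_p)
    ultimately show ?thesis using sem_tri[of "Rec F G"] v eval_Rec0[OF F(2), of G] by simp
  next
    case (8 e)
    from Ee[OF 8(3)] obtain P where P: "c = enc P" "eval P (tx e) (ty e)" using 8 by (auto elim: semE)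
    then obtain F G where PFG: "P = Rec F G" "cf = enc F" "cg = enc G" using c a 8(1)
      by (cases P) auto
    from Es[OF 8(6)] obtain G' where G': "cg = enc G'" "eval G' (pe (p1 x - 1) (pe (ty e) (p2 x))) y" by (auto elim: semE)
    have "G' = G" using G' PFG inj_enc by (auto dest: injD)
    have "x = pe (Suc (p1 x - 1)) (p2 x)" using 8(2) by (simp add: pe_p)
    then have "eval P x y" using eval_RecS[of F G "p1 x - 1" "p2 x" "ty e" y] P 8 G' \<open>G' = G\<close> PFG by simp
    then show ?thesis using P(1) v sem_tri by simp
  next
    case 9
    from Es[OF 9(2)] obtain F where F: "a = enc F" "eval F (pe y x) 0" by (auto elim: semE)
    have "\<forall>m<y. \<exists>w. w \<noteq> 0 \<and> eval F (pe m x) w"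
    proof (intro allI impI)
      fix m assume "m < y"
      then obtain e where e: "e \<in> E" "tc e = a" "tx e = pe m x" "ty e \<noteq> 0" using 9 by blast
      from Ee[OF e(1)] obtain F' where "a = enc F'" "eval F' (pe m x) (ty e)" using e by (auto elim: semE)
      then show "\<exists>w. w \<noteq> 0 \<and> eval F (pe m x) w" using F e inj_enc by (auto dest: injD)
    qed
    then have "eval (Mu F) x y" using eval_Mu F by blast
    moreover have "c = enc (Mu F)" using c F 9 by simp
    ultimately show ?thesis using v sem_tri by metis
  qed
qed


definition JustC :: "nat set \<Rightarrow> nat \<Rightarrow> bool" where
  "JustC C c \<longleftrightarrow> (p1 c \<le> 3 \<and> p2 c = 0) \<or>
     ((p1 c = 4 \<or> p1 c = 5 \<or> p1 c = 6) \<and> p1 (p2 c) \<in> C \<and> p2 (p2 c) \<in> C) \<or>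
     (p1 c = 7 \<and> p2 c \<in> C)"

definition goodJ :: "(nat set \<Rightarrow> nat \<Rightarrow> bool) \<Rightarrow> nat list \<Rightarrow> bool" where
  "goodJ J L \<longleftrightarrow> (\<forall>k<length L. J (set (take k L)) (L ! k))"

lemma set_take_nth: "set (take k L) = (\<lambda>i. L ! i) ` {..<min k (length L)}"
proof -
  have "set (take k L) = {take k L ! i | i. i < length (take k L)}" by (rule set_conv_nth)
  also have "\<dots> = (\<lambda>i. L ! i) ` {..<min k (length L)}"
  proof (rule set_eqI)
    fix z show "z \<in> {take k L ! i | i. i < length (take k L)} \<longleftrightarrow> z \<in> (\<lambda>i. L ! i) ` {..<min k (length L)}"
      by (auto simp: image_iff) (metis min_less_iff_conj nth_take)
  qed
  finally show ?thesis .
qed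

lemma goodJ_sound:
  assumes g: "goodJ J L" and step: "\<And>E v. \<forall>e\<in>E. Q e \<Longrightarrow> J E v \<Longrightarrow> Q v"
  shows "\<forall>v\<in>set L. Q v"
proof -
  have "\<forall>k<length L. Q (L ! k)"
  proof (intro allI)
    fix k show "k < length L \<longrightarrow> Q (L ! k)"
    proof (induction k rule: less_induct)
      case (less k)
      show ?case
      proof
        assume k: "k < length L"
        have "\<forall>e\<in>set (take k L). Q e" using less k by (auto simp: set_take_nth)
        moreover have "J (set (take k L)) (L ! k)" using g k by (simp add: goodJ_def)
        ultimately show "Q (L ! k)" by (rule step)
      qed
    qed
  qed
  then show ?thesis by (auto simp: in_set_conv_nth)
qed

definition monoJ :: "(nat set \<Rightarrow> nat \<Rightarrow> bool) \<Rightarrow> bool" where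
  "monoJ J \<longleftrightarrow> (\<forall>E E' v. E \<subseteq> E' \<longrightarrow> J E v \<longrightarrow> J E' v)"

lemma goodJ_append:
  assumes m: "monoJ J" and g1: "goodJ J L1" and g2: "goodJ J L2"
  shows "goodJ J (L1 @ L2)"
  unfolding goodJ_def
proof (intro allI impI)
  fix k assume k: "k < length (L1 @ L2)"
  show "J (set (take k (L1 @ L2))) ((L1 @ L2) ! k)"
  proof (cases "k < length L1")
    case True then show ?thesis using g1 by (simp add: goodJ_def nth_append)
  next
    case False
    then have "J (set (take (k - length L1) L2)) (L2 ! (k - length L1))" using g2 k by (simp add: goodJ_def)
    moreover have "set (take (k - length L1) L2) \<subseteq> set (take k (L1 @ L2))" using False by auto
    ultimately have "J (set (take k (L1 @ L2))) (L2 ! (k - length L1))" using m unfolding monoJ_def by blast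
    then show ?thesis using False by (simp add: nth_append)
  qed
qed

lemma goodJ_snoc: "goodJ J L \<Longrightarrow> J (set L) v \<Longrightarrow> goodJ J (L @ [v])"
  unfolding goodJ_def by (auto simp: nth_append less_Suc_eq)

lemma goodJ_Nil[simp]: "goodJ J []" by (simp add: goodJ_def)

lemma monoJC: "monoJ JustC" unfolding monoJ_def JustC_def by blast
lemma JustS_mono: "JustS C E v \<Longrightarrow> C \<subseteq> C' \<Longrightarrow> E \<subseteq> E' \<Longrightarrow> JustS C' E' v"
  unfolding JustS_def
  apply (erule disjE) subgoal by (rule disjI1) blast
  apply (rule disjI2, erule disjE) subgoal by (rule disjI1) blast
  apply (rule disjI2, erule disjE) subgoal by (rule disjI1) blast
  apply (rule disjI2, erule disjE) subgoal by (rule disjI1) blast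
  apply (rule disjI2, erule disjE) subgoal by (rule disjI1) blast
  apply (rule disjI2, erule disjE) subgoal by (rule disjI1) blast
  apply (rule disjI2, erule disjE) subgoal by (rule disjI1) blast
  apply (rule disjI2) by blast

lemma monoJS: "monoJ (JustS C)" unfolding monoJ_def by (meson JustS_mono order_refl)

lemma goodJS_monoC: "goodJ (JustS C) L \<Longrightarrow> C \<subseteq> C' \<Longrightarrow> goodJ (JustS C') L"
  unfolding goodJ_def by (meson JustS_mono order_refl)

lemma codes_sound: "goodJ JustC L \<Longrightarrow> set L \<subseteq> range enc"
proof -
  assume g: "goodJ JustC L"
  have "\<forall>v\<in>set L. v \<in> range enc"
  proof (rule goodJ_sound[OF g])
    fix E v assume E: "\<forall>e\<in>E. e \<in> range enc" and J: "JustC E v"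
    obtain tag a where va: "v = pe tag a" by (metis pe_p)
    obtain cf cg where a: "a = pe cf cg" by (metis pe_p)
    have J': "(tag \<le> 3 \<and> a = 0) \<or> ((tag = 4 \<or> tag = 5 \<or> tag = 6) \<and> cf \<in> E \<and> cg \<in> E) \<or> (tag = 7 \<and> a \<in> E)"
      using J unfolding JustC_def va a by simp
    show "v \<in> range enc"
    proof (cases "tag \<le> 3 \<and> a = 0")
      case True
      then have "tag = 0 \<or> tag = 1 \<or> tag = 2 \<or> tag = 3" "a = 0" by auto
      then have "v = enc Zero \<or> v = enc Succ \<or> v = enc Fst \<or> v = enc Snd" unfolding va by auto
      then show ?thesis by blast
    next
      case False
      note J'' = J'[simplified False simp_thms]
      show ?thesis
      proof (cases "tag = 7")
        case True
        then obtain F where "a = enc F" using J'' E by auto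
        then have "v = enc (Mu F)" using True va by simp
        then show ?thesis by blast
      next
        case False
        then have t: "(tag = 4 \<or> tag = 5 \<or> tag = 6)" "cf \<in> E" "cg \<in> E" using J'' by auto
        then obtain F G where FG: "cf = enc F" "cg = enc G" using E by blast
        from t(1) have "v = enc (Comp F G) \<or> v = enc (recf.Pair F G) \<or> v = enc (Rec F G)"
          unfolding va a FG by auto
        then show ?thesis by blast
      qed
    qed
  qed
  then show ?thesis by blast
qed

lemma trace_sound: "goodJ JustC Lc \<Longrightarrow> goodJ (JustS (set Lc)) L \<Longrightarrow> \<forall>v\<in>set L. sem v"
proof -
  assume a: "goodJ JustC Lc" and b: "goodJ (JustS (set Lc)) L"
  have C: "set Lc \<subseteq> range enc" using codes_sound[OF a] .
  show ?thesis by (rule goodJ_sound[OF b]) (rule sound_step[OF C])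
qed


lemma codes_two:
  assumes "goodJ JustC L1" "enc P1 \<in> set L1" "goodJ JustC L2" "enc P2 \<in> set L2"
    "c = pe t (pe (enc P1) (enc P2))" "t = 4 \<or> t = 5 \<or> t = 6"
  shows "\<exists>L. goodJ JustC L \<and> c \<in> set L"
proof -
  have "JustC (set (L1 @ L2)) c" unfolding JustC_def using assms(2,4,5,6) by simp
  then have "goodJ JustC ((L1 @ L2) @ [c])"
    by (intro goodJ_snoc goodJ_append monoJC assms(1,3))
  then show ?thesis by (intro exI[of _ "(L1 @ L2) @ [c]"]) simp
qed

lemma codes_complete: "\<exists>L. goodJ JustC L \<and> enc P \<in> set L"
proof (induction P)
  case Zero show ?case by (rule exI[of _ "[enc Zero]"]) (simp add: goodJ_def JustC_def)
next
  case Succ show ?case by (rule exI[of _ "[enc Succ]"]) (simp add: goodJ_def JustC_def)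
next
  case Fst show ?case by (rule exI[of _ "[enc Fst]"]) (simp add: goodJ_def JustC_def)
next
  case Snd show ?case by (rule exI[of _ "[enc Snd]"]) (simp add: goodJ_def JustC_def)
next
  case (Comp P1 P2)
  then obtain L1 L2 where "goodJ JustC L1" "enc P1 \<in> set L1" "goodJ JustC L2" "enc P2 \<in> set L2" by blast
  from codes_two[OF this] show ?case by simp
next
  case (Pair P1 P2)
  then obtain L1 L2 where "goodJ JustC L1" "enc P1 \<in> set L1" "goodJ JustC L2" "enc P2 \<in> set L2" by blast
  from codes_two[OF this] show ?case by simp
next
  case (Rec P1 P2)
  then obtain L1 L2 where "goodJ JustC L1" "enc P1 \<in> set L1" "goodJ JustC L2" "enc P2 \<in> set L2" by blast
  from codes_two[OF this] show ?case by simp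
next
  case (Mu P1)
  then obtain L1 where L1: "goodJ JustC L1" "enc P1 \<in> set L1" by blast
  have "JustC (set L1) (enc (Mu P1))" unfolding JustC_def using L1 by simp
  then have "goodJ JustC (L1 @ [enc (Mu P1)])" by (intro goodJ_snoc L1)
  then show ?case by (intro exI[of _ "L1 @ [enc (Mu P1)]"]) simp
qed

definition TR :: "nat list \<Rightarrow> nat list \<Rightarrow> bool" where
  "TR Lc L \<longleftrightarrow> goodJ JustC Lc \<and> goodJ (JustS (set Lc)) L"

lemma TR_append: "TR Lc1 L1 \<Longrightarrow> TR Lc2 L2 \<Longrightarrow> TR (Lc1 @ Lc2) (L1 @ L2)"
proof -
  assume a: "TR Lc1 L1" "TR Lc2 L2"
  have "goodJ (JustS (set (Lc1 @ Lc2))) L1" "goodJ (JustS (set (Lc1 @ Lc2))) L2"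
    using a goodJS_monoC unfolding TR_def by fastforce+
  then show ?thesis using a unfolding TR_def by (simp add: goodJ_append monoJC monoJS)
qed

lemma TR_snoc: "TR Lc L \<Longrightarrow> JustS (set Lc) (set L) v \<Longrightarrow> TR Lc (L @ [v])"
  unfolding TR_def by (simp add: goodJ_snoc)

lemma TR_code: "TR Lc L \<Longrightarrow> \<exists>Lc'. TR (Lc @ Lc') L \<and> enc P \<in> set (Lc @ Lc')"
proof -
  assume a: "TR Lc L"
  obtain L' where L': "goodJ JustC L'" "enc P \<in> set L'" using codes_complete by blast
  have "TR (Lc @ L') L" using a L' goodJS_monoC unfolding TR_def
    by (simp add: goodJ_append monoJC) (meson Un_upper1)
  then show ?thesis using L' by auto
qed

lemma TR_many:
  assumes "\<forall>m E E'. E \<subseteq> E' \<longrightarrow> Q m E \<longrightarrow> Q m E'"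
  shows "\<forall>m<(n::nat). \<exists>Lc L. TR Lc L \<and> Q m (set L) \<Longrightarrow> \<exists>Lc L. TR Lc L \<and> (\<forall>m<n. Q m (set L))"
proof (induction n)
  case 0 then show ?case by (intro exI[of _ "[]"]) (auto simp: TR_def)
next
  case (Suc n)
  then obtain Lc L where 1: "TR Lc L" "\<forall>m<n. Q m (set L)" by auto
  obtain Lc' L' where 2: "TR Lc' L'" "Q n (set L')" using Suc.prems by blast
  have "\<forall>m<Suc n. Q m (set (L @ L'))"
  proof (intro allI impI)
    fix m assume "m < Suc n"
    then consider "m < n" | "m = n" by linarith
    then show "Q m (set (L @ L'))"
    proof cases
      case 1 then show ?thesis using \<open>\<forall>m<n. Q m (set L)\<close> assms by (metis Un_upper1 set_append)
    next
      case 2 then show ?thesis using \<open>Q n (set L')\<close> assms by (metis Un_upper2 set_append)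
    qed
  qed
  then show ?case using TR_append[OF 1(1) 2(1)] by blast
qed

lemma TR_single: "JustS {} {} v \<Longrightarrow> TR [] [v]"
  unfolding TR_def goodJ_def by simp

lemma trace_complete: "eval P x y \<Longrightarrow> \<exists>Lc L. TR Lc L \<and> tri (enc P) x y \<in> set L"
proof (induction rule: eval.induct)
  case (eval_Zero x)
  have "JustS {} {} (tri (enc Zero) x 0)" by (simp add: JustS_def)
  then show ?case using TR_single by fastforce
next
  case (eval_Succ x)
  have "JustS {} {} (tri (enc Succ) x (Suc x))" by (simp add: JustS_def)
  then show ?case using TR_single by fastforce
next
  case (eval_Fst x)
  have "JustS {} {} (tri (enc Fst) x (p1 x))" by (simp add: JustS_def)
  then show ?case using TR_single by fastforce
next
  case (eval_Snd x)
  have "JustS {} {} (tri (enc Snd) x (p2 x))" by (simp add: JustS_def)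
  then show ?case using TR_single by fastforce
next
  case (eval_Comp g x y f z)
  then obtain Lc1 L1 Lc2 L2 where a: "TR Lc1 L1" "tri (enc g) x y \<in> set L1" "TR Lc2 L2" "tri (enc f) y z \<in> set L2"
    by blast
  have "JustS (set (Lc1 @ Lc2)) (set (L1 @ L2)) (tri (enc (Comp f g)) x z)"
    unfolding JustS_def using a by simp (rule bexI[of _ "tri (enc g) x y"], simp_all)
  then show ?case using TR_snoc[OF TR_append[OF a(1) a(3)]] by (metis append_is_Nil_conv in_set_conv_decomp last_in_set last_snoc)
next
  case (eval_Pair f x a g b)
  then obtain Lc1 L1 Lc2 L2 where a: "TR Lc1 L1" "tri (enc f) x a \<in> set L1" "TR Lc2 L2" "tri (enc g) x b \<in> set L2"
    by blast
  have "JustS (set (Lc1 @ Lc2)) (set (L1 @ L2)) (tri (enc (recf.Pair f g)) x (pe a b))"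
    unfolding JustS_def using a
    by simp (metis UnI1 UnI2 tri_simps)
  then show ?case using TR_snoc[OF TR_append[OF a(1) a(3)]] by (metis append_is_Nil_conv in_set_conv_decomp last_in_set last_snoc)
next
  case (eval_Rec0 f x y g)
  then obtain Lc1 L1 where a: "TR Lc1 L1" "tri (enc f) x y \<in> set L1" by blast
  from TR_code[OF a(1), of g] obtain Lc' where b: "TR (Lc1 @ Lc') L1" "enc g \<in> set (Lc1 @ Lc')" by blast
  have "JustS (set (Lc1 @ Lc')) (set L1) (tri (enc (Rec f g)) (pe 0 x) y)"
    unfolding JustS_def using a b by simp
  then show ?case using TR_snoc[OF b(1)] by (metis append_is_Nil_conv in_set_conv_decomp last_in_set last_snoc)
next
  case (eval_RecS f g n x y z)
  then obtain Lc1 L1 Lc2 L2 where a: "TR Lc1 L1" "tri (enc (Rec f g)) (pe n x) y \<in> set L1" "TR Lc2 L2"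
     "tri (enc g) (pe n (pe y x)) z \<in> set L2"
    by blast
  have "JustS (set (Lc1 @ Lc2)) (set (L1 @ L2)) (tri (enc (Rec f g)) (pe (Suc n) x) z)"
    unfolding JustS_def using a
    by simp (rule bexI[of _ "tri (enc (Rec f g)) (pe n x) y"], simp_all)
  then show ?case using TR_snoc[OF TR_append[OF a(1) a(3)]] by (metis append_is_Nil_conv in_set_conv_decomp last_in_set last_snoc)
next
  case (eval_Mu f n x)
  then obtain Lc1 L1 where a: "TR Lc1 L1" "tri (enc f) (pe n x) 0 \<in> set L1" by blast
  have "\<exists>Lc L. TR Lc L \<and> (\<forall>m<n. (\<lambda>m E. \<exists>v. v \<noteq> 0 \<and> tri (enc f) (pe m x) v \<in> E) m (set L))"
  proof (rule TR_many)
    show "\<forall>m<n. \<exists>Lc L. TR Lc L \<and> (\<lambda>m E. \<exists>v. v \<noteq> 0 \<and> tri (enc f) (pe m x) v \<in> E) m (set L)"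
      using eval_Mu.IH(2) by blast
  qed blast
  then obtain Lc2 L2 where b: "TR Lc2 L2" "\<forall>m<n. \<exists>v. v \<noteq> 0 \<and> tri (enc f) (pe m x) v \<in> set L2" by blast
  have c: "\<forall>m<n. \<exists>e\<in>set (L1 @ L2). tc e = enc f \<and> tx e = pe m x \<and> ty e \<noteq> 0"
  proof (intro allI impI)
    fix m assume "m < n"
    then obtain v where "v \<noteq> 0" "tri (enc f) (pe m x) v \<in> set L2" using b by blast
    then show "\<exists>e\<in>set (L1 @ L2). tc e = enc f \<and> tx e = pe m x \<and> ty e \<noteq> 0"
      by (intro bexI[of _ "tri (enc f) (pe m x) v"]) simp_all
  qed
  have "JustS (set (Lc1 @ Lc2)) (set (L1 @ L2)) (tri (enc (Mu f)) x n)"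
    unfolding JustS_def using a(2) c by simp
  then show ?case using TR_snoc[OF TR_append[OF a(1) b(1)]] by (metis append_is_Nil_conv in_set_conv_decomp last_in_set last_snoc)
qed

lemma trace_char: "sem v \<longleftrightarrow> (\<exists>Lc L. TR Lc L \<and> v \<in> set L)"
proof
  assume "sem v"
  then obtain P where "tc v = enc P" "eval P (tx v) (ty v)" by (auto simp: sem_def)
  then show "\<exists>Lc L. TR Lc L \<and> v \<in> set L" using trace_complete tri_p by metis
next
  assume "\<exists>Lc L. TR Lc L \<and> v \<in> set L"
  then show "sem v" using trace_sound unfolding TR_def by blast
qed


definition nthc :: "nat \<Rightarrow> nat \<Rightarrow> nat" where
  "nthc t i = p1 (rec_nat t (\<lambda>_ y. p2 y) i)"

lemma rec_p2_Suc: "rec_nat t (\<lambda>_ y. p2 y) (Suc i) = rec_nat (p2 t) (\<lambda>_ y. p2 y) i"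
  by (induction i) auto

lemma cmp_nthc[cr]: "cmp f \<Longrightarrow> cmp g \<Longrightarrow> cmp (\<lambda>x. nthc (f x) (g x))"
proof -
  assume f: "cmp f" and g: "cmp g"
  have "cmp (\<lambda>w. rec_nat ((\<lambda>x. x) (f w)) (\<lambda>k y. (\<lambda>v. p2 (p1 (p2 v))) (pe k (pe y (f w)))) (g w))"
    by (rule comp_rec2) (auto intro!: cr f g)
  then have "cmp (\<lambda>w. p1 (rec_nat ((\<lambda>x. x) (f w)) (\<lambda>k y. (\<lambda>v. p2 (p1 (p2 v))) (pe k (pe y (f w)))) (g w)))"
    by (rule comp_p1)
  then show ?thesis by (simp add: nthc_def)
qed

lemma cmp_tri[cr]: "cmp f \<Longrightarrow> cmp g \<Longrightarrow> cmp h \<Longrightarrow> cmp (\<lambda>x. tri (f x) (g x) (h x))"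
  unfolding tri_def by (intro cr)

primrec lcode :: "nat list \<Rightarrow> nat" where
  "lcode [] = 0" | "lcode (a # L) = pe a (lcode L)"

lemma nthc_0: "nthc t 0 = p1 t" by (simp add: nthc_def)
lemma nthc_Suc: "nthc t (Suc i) = nthc (p2 t) i" unfolding nthc_def by (simp only: rec_p2_Suc)

lemma nthc_lcode: "i < length L \<Longrightarrow> nthc (lcode L) i = L ! i"
proof (induction L arbitrary: i)
  case Nil then show ?case by simp
next
  case (Cons a L) then show ?case
    by (cases i) (auto simp: nthc_0 nthc_Suc)
qed

definition TRN :: "nat \<Rightarrow> nat \<Rightarrow> nat \<Rightarrow> nat \<Rightarrow> bool" where
  "TRN nc cs n t \<longleftrightarrow> (\<forall>k<nc. JustC (nthc cs ` {..<k}) (nthc cs k)) \<and>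
     (\<forall>k<n. JustS (nthc cs ` {..<nc}) (nthc t ` {..<k}) (nthc t k))"

lemma img_lcode: "k \<le> length L \<Longrightarrow> nthc (lcode L) ` {..<k} = set (take k L)"
proof -
  assume k: "k \<le> length L"
  have "nthc (lcode L) ` {..<k} = (\<lambda>i. L ! i) ` {..<k}"
    by (rule image_cong) (use k in \<open>auto simp: nthc_lcode\<close>)
  also have "\<dots> = set (take k L)" using k by (simp add: set_take_nth min_absorb1)
  finally show ?thesis .
qed

lemma img_nth: "k \<le> length L \<Longrightarrow> (\<lambda>i. L ! i) ` {..<k} = set (take k L)"
  by (simp add: set_take_nth min_absorb1)

lemma TR_TRN: "TR Lc L \<Longrightarrow> TRN (length Lc) (lcode Lc) (length L) (lcode L)"
proof -
  assume a: "TR Lc L"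
  have 1: "JustC (nthc (lcode Lc) ` {..<k}) (nthc (lcode Lc) k)" if "k < length Lc" for k
  proof -
    have "JustC (set (take k Lc)) (Lc ! k)" using a that unfolding TR_def goodJ_def by blast
    then show ?thesis using that by (simp add: img_lcode img_nth nthc_lcode)
  qed
  have 2: "JustS (nthc (lcode Lc) ` {..<length Lc}) (nthc (lcode L) ` {..<k}) (nthc (lcode L) k)" if "k < length L" for k
  proof -
    have "JustS (set Lc) (set (take k L)) (L ! k)" using a that unfolding TR_def goodJ_def by blast
    then show ?thesis using that by (simp add: img_lcode img_nth nthc_lcode less_imp_le)
  qed
  show ?thesis unfolding TRN_def using 1 2 by blast
qed

lemma set_take_map: "k \<le> m \<Longrightarrow> set (take k (map f [0..<m])) = f ` {..<k}"
  by (simp add: take_map atLeast0LessThan min_absorb1)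

lemma set_map_upt: "set (map f [0..<m]) = f ` {..<m}"
  by (simp add: atLeast0LessThan)

lemma TRN_TR: "TRN nc cs n t \<Longrightarrow> TR (map (nthc cs) [0..<nc]) (map (nthc t) [0..<n])"
proof -
  assume a: "TRN nc cs n t"
  show ?thesis unfolding TR_def goodJ_def
  proof (intro conjI allI impI)
    fix k assume "k < length (map (nthc cs) [0..<nc])"
    then show "JustC (set (take k (map (nthc cs) [0..<nc]))) (map (nthc cs) [0..<nc] ! k)"
      using a unfolding TRN_def by (simp add: set_take_map)
  next
    fix k assume "k < length (map (nthc t) [0..<n])"
    then show "JustS (set (map (nthc cs) [0..<nc])) (set (take k (map (nthc t) [0..<n]))) (map (nthc t) [0..<n] ! k)"
      using a unfolding TRN_def by (simp add: set_take_map set_map_upt atLeast0LessThan)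
  qed
qed

lemma sem_TRN: "sem v \<longleftrightarrow> (\<exists>nc cs n t. TRN nc cs n t \<and> (\<exists>k<n. nthc t k = v))"
proof
  assume "sem v"
  then obtain Lc L where "TR Lc L" "v \<in> set L" using trace_char by blast
  then show "\<exists>nc cs n t. TRN nc cs n t \<and> (\<exists>k<n. nthc t k = v)"
    using TR_TRN by (metis in_set_conv_nth nthc_lcode)
next
  assume "\<exists>nc cs n t. TRN nc cs n t \<and> (\<exists>k<n. nthc t k = v)"
  then obtain nc cs n t k where "TRN nc cs n t" "k < n" "nthc t k = v" by blast
  then show "sem v" using trace_char TRN_TR by fastforce
qed

definition Halt :: "nat \<Rightarrow> nat \<Rightarrow> nat \<Rightarrow> bool" where
  "Halt a b w \<longleftrightarrow> TRN (p1 (p1 w)) (p2 (p1 w)) (p1 (p2 w)) (p2 (p2 w)) \<and>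
     (\<exists>k<p1 (p2 w). tc (nthc (p2 (p2 w)) k) = a \<and> tx (nthc (p2 (p2 w)) k) = b)"

lemma W_Halt: "b \<in> W a \<longleftrightarrow> (\<exists>w. Halt a b w)"
proof -
  have "b \<in> W a \<longleftrightarrow> (\<exists>y. sem (tri a b y))"
    by (auto simp: W_def psi_def sem_def split: if_splits)
  also have "\<dots> \<longleftrightarrow> (\<exists>nc cs n t. TRN nc cs n t \<and> (\<exists>k<n. tc (nthc t k) = a \<and> tx (nthc t k) = b))"
    unfolding sem_TRN by (metis tri_p tri_simps(1,2))
  also have "\<dots> \<longleftrightarrow> (\<exists>w. Halt a b w)"
    unfolding Halt_def
    by (metis fst_conv prod_encode_inverse snd_conv)
  finally show ?thesis .
qed

lemma img_mem: "x \<in> f ` {..<k} \<longleftrightarrow> (\<exists>i<k. f i = x)" by auto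
lemma img_bex: "(\<exists>e\<in>f ` {..<k}. P e) \<longleftrightarrow> (\<exists>i<k. P (f i))" by auto

lemma cpred_comp: "cpred P \<Longrightarrow> cmp g \<Longrightarrow> cpred (\<lambda>x. P (g x))"
  unfolding cpred_def by (drule comp_compose) auto

lemma cpred_TRN0: "cpred (\<lambda>z. TRN (p1 z) (p1 (p2 z)) (p1 (p2 (p2 z))) (p2 (p2 (p2 z))))"
  unfolding TRN_def JustS_def JustC_def img_mem img_bex
  by (intro cr)

lemma cpred_TRN: "cmp a \<Longrightarrow> cmp b \<Longrightarrow> cmp c \<Longrightarrow> cmp d \<Longrightarrow> cpred (\<lambda>x. TRN (a x) (b x) (c x) (d x))"
  using cpred_comp[OF cpred_TRN0, of "\<lambda>x. pe (a x) (pe (b x) (pe (c x) (d x)))"] by (simp add: comp_pe)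

lemma cpred_Halt0: "cpred (\<lambda>z. Halt (p1 z) (p1 (p2 z)) (p2 (p2 z)))"
  unfolding Halt_def by (intro cr cpred_TRN)

lemma cpred_Halt: "cmp a \<Longrightarrow> cmp b \<Longrightarrow> cmp c \<Longrightarrow> cpred (\<lambda>x. Halt (a x) (b x) (c x))"
  using cpred_comp[OF cpred_Halt0, of "\<lambda>x. pe (a x) (pe (b x) (c x))"] by (simp add: comp_pe)


lemma cpred_cset: "cpred P \<Longrightarrow> computable_set {u. P u}"
  unfolding cpred_def computable_set_def comp_tc by simp

lemma sc_iff: "self_constructing (W e) \<longleftrightarrow> W e \<noteq> {} \<and> (\<forall>a\<in>W e. W a = W e)"
  unfolding self_constructing_def ce_set_def by blast

definition Mtx :: "nat \<Rightarrow> nat \<Rightarrow> nat \<Rightarrow> bool" where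
  "Mtx e y z \<longleftrightarrow> Halt e (p1 z) (p1 (p2 z)) \<and>
    (Halt e (p1 y) (p1 (p2 (p2 y))) \<and> Halt (p1 y) (p1 (p2 y)) (p2 (p2 (p2 y))) \<longrightarrow> Halt e (p1 (p2 y)) (p1 (p2 (p2 z)))) \<and>
    (Halt e (p1 y) (p1 (p2 (p2 y))) \<and> Halt e (p1 (p2 y)) (p2 (p2 (p2 y))) \<longrightarrow> Halt (p1 y) (p1 (p2 y)) (p2 (p2 (p2 z))))"

lemma S_Mtx: "self_constructing (W e) \<longleftrightarrow> (\<forall>y. \<exists>z. Mtx e y z)"
proof
  assume sc: "self_constructing (W e)"
  then obtain a0 where "a0 \<in> W e" using sc_iff by blast
  then obtain w0 where w0: "Halt e a0 w0" using W_Halt by blast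
  show "\<forall>y. \<exists>z. Mtx e y z"
  proof
    fix y
    let ?a = "p1 y" and ?b = "p1 (p2 y)" and ?c1 = "p1 (p2 (p2 y))" and ?c2 = "p2 (p2 (p2 y))"
    obtain w1 where w1: "Halt e ?a ?c1 \<and> Halt ?a ?b ?c2 \<longrightarrow> Halt e ?b w1"
    proof (cases "Halt e ?a ?c1 \<and> Halt ?a ?b ?c2")
      case True
      then have "?a \<in> W e" "?b \<in> W ?a" using W_Halt by blast+
      then have "?b \<in> W e" using sc sc_iff by blast
      then show ?thesis using that W_Halt by blast
    qed (use that in blast)
    obtain w2 where w2: "Halt e ?a ?c1 \<and> Halt e ?b ?c2 \<longrightarrow> Halt ?a ?b w2"
    proof (cases "Halt e ?a ?c1 \<and> Halt e ?b ?c2")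
      case True
      then have "?a \<in> W e" "?b \<in> W e" using W_Halt by blast+
      then have "?b \<in> W ?a" using sc sc_iff by blast
      then show ?thesis using that W_Halt by blast
    qed (use that in blast)
    have "Mtx e y (pe a0 (pe w0 (pe w1 w2)))"
      unfolding Mtx_def using w0 w1 w2 by simp
    then show "\<exists>z. Mtx e y z" by blast
  qed
next
  assume H: "\<forall>y. \<exists>z. Mtx e y z"
  have ne: "W e \<noteq> {}"
    using H[rule_format, of 0] W_Halt unfolding Mtx_def by blast
  have "W a = W e" if a: "a \<in> W e" for a
  proof
    show "W a \<subseteq> W e"
    proof
      fix b assume "b \<in> W a"
      then obtain c1 c2 where "Halt e a c1" "Halt a b c2" using a W_Halt by blast
      moreover obtain z where "Mtx e (pe a (pe b (pe c1 c2))) z" using H by blast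
      ultimately show "b \<in> W e" unfolding Mtx_def using W_Halt by auto
    qed
  next
    show "W e \<subseteq> W a"
    proof
      fix b assume "b \<in> W e"
      then obtain c1 c2 where "Halt e a c1" "Halt e b c2" using a W_Halt by blast
      moreover obtain z where "Mtx e (pe a (pe b (pe c1 c2))) z" using H by blast
      ultimately show "b \<in> W a" unfolding Mtx_def using W_Halt by auto
    qed
  qed
  then show "self_constructing (W e)" using ne sc_iff by blast
qed

lemma Pi02_S: "Pi02 {e. self_constructing (W e)}"
  unfolding Pi02_def
proof (intro exI conjI)
  show "computable_set {u. Mtx (p1 u) (p1 (p2 u)) (p2 (p2 u))}"
    by (rule cpred_cset) (unfold Mtx_def, intro cr cpred_Halt)
  show "\<forall>x. (x \<in> {e. self_constructing (W e)}) = (\<forall>y. \<exists>z. pe x (pe y z) \<in> {u. Mtx (p1 u) (p1 (p2 u)) (p2 (p2 u))})"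
    by (simp add: S_Mtx)
qed

lemma Pi02_Tot: "Pi02 Tot"
  unfolding Pi02_def
proof (intro exI conjI)
  show "computable_set {u. Halt (p1 u) (p1 (p2 u)) (p2 (p2 u))}"
    by (rule cpred_cset) (intro cr cpred_Halt)
  show "\<forall>x. (x \<in> Tot) = (\<forall>y. \<exists>z. pe x (pe y z) \<in> {u. Halt (p1 u) (p1 (p2 u)) (p2 (p2 u))})"
    by (auto simp: Tot_def W_Halt[symmetric])
qed

definition ek :: "nat \<Rightarrow> nat" where "ek n = enc (konst n)"

lemma ek_rec: "ek n = rec_nat (pe 0 0) (\<lambda>k y. pe 4 (pe (pe 1 0) y)) n"
  by (induction n) (auto simp: ek_def)

lemma cmp_ek[cr]: "cmp f \<Longrightarrow> cmp (\<lambda>x. ek (f x))"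
proof -
  assume f: "cmp f"
  have "cmp (\<lambda>w. rec_nat ((\<lambda>_. pe 0 0) (f w)) (\<lambda>k y. (\<lambda>v. pe 4 (pe (pe 1 0) (p1 (p2 v)))) (pe k (pe y (f w)))) (f w))"
    by (rule comp_rec2) (auto intro!: cr f)
  then show ?thesis by (simp add: ek_rec)
qed

lemma inj_konst: "konst a = konst b \<Longrightarrow> a = b"
  by (induction a arbitrary: b; case_tac b; auto)

lemma ek_inj: "ek a = ek b \<Longrightarrow> a = b"
  unfolding ek_def using inj_enc inj_konst by (meson injD)

definition prog :: "nat \<Rightarrow> recf \<Rightarrow> nat \<Rightarrow> nat \<Rightarrow> recf" where
  "prog m M x j = Comp M (recf.Pair (konst m) (recf.Pair (konst x) (recf.Pair (konst j) (recf.Pair Fst Snd))))"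

definition code :: "nat \<Rightarrow> nat \<Rightarrow> nat \<Rightarrow> nat" where
  "code m x j = pe 4 (pe m (pe 5 (pe (ek m) (pe 5 (pe (ek x) (pe 5 (pe (ek j) (enc (recf.Pair Fst Snd)))))))))"

lemma code_prog: "code (enc M) x j = enc (prog (enc M) M x j)"
  by (simp add: code_def prog_def ek_def)

lemma code_inj: "code m x j = code m x j' \<Longrightarrow> j = j'"
  by (simp add: code_def) (use ek_inj in blast)

lemma eval_prog: "eval (prog m M x j) z y \<longleftrightarrow> eval M (pe m (pe x (pe j z))) y"
proof -
  have g: "eval (recf.Pair (konst m) (recf.Pair (konst x) (recf.Pair (konst j) (recf.Pair Fst Snd)))) z (pe m (pe x (pe j z)))"
    using eval_Pair[OF eval_Fst eval_Snd, of z] 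
    by (auto intro!: eval_Pair eval_konst simp: pe_p)
  show ?thesis
  proof
    assume "eval (prog m M x j) z y"
    then show "eval M (pe m (pe x (pe j z))) y" unfolding prog_def
      by (cases rule: eval.cases) (use g eval_det in blast)+
  next
    assume "eval M (pe m (pe x (pe j z))) y"
    then show "eval (prog m M x j) z y" unfolding prog_def using g eval_Comp by blast
  qed
qed

lemma eval_Mu_total:
  assumes F: "\<And>v. eval F v (f v)"
  shows "(\<exists>y. eval (Mu F) u y) \<longleftrightarrow> (\<exists>n. f (pe n u) = 0)"
proof
  assume "\<exists>y. eval (Mu F) u y"
  then obtain n where "eval (Mu F) u n" by blast
  then have "eval F (pe n u) 0" by (cases rule: eval.cases) auto
  then show "\<exists>n. f (pe n u) = 0" using F eval_det by blast
next
  assume "\<exists>n. f (pe n u) = 0"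
  then obtain n where n: "f (pe n u) = 0" "\<forall>m<n. f (pe m u) \<noteq> 0"
    using exists_least_iff[of "\<lambda>n. f (pe n u) = 0"] by blast
  have "eval (Mu F) u n"
    by (rule eval_Mu) (use n F in \<open>metis\<close>, use n F in blast)
  then show "\<exists>y. eval (Mu F) u y" by blast
qed

lemma cmp_Q: "computable_set R \<Longrightarrow> cmp (\<lambda>v. if p2 (p2 (p2 (p2 v))) = code (p1 (p2 v)) (p1 (p2 (p2 v))) (p1 (p1 v)) \<and>
      (p1 (p1 v) \<le> Suc (p1 (p2 (p2 (p2 v)))) \<or> (\<forall>y<Suc (p1 (p1 v)). \<exists>z<Suc (p2 (p1 v)). pe (p1 (p2 (p2 v))) (pe y z) \<in> R)) then 0 else 1)"
  unfolding code_def by (intro cr cpred_mem)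

lemma hard:
  assumes "Pi02 A"
  shows "m_reducible A {e. self_constructing (W e)}"
proof -
  from assms obtain R where R: "computable_set R"
    and A: "\<And>x. x \<in> A \<longleftrightarrow> (\<forall>y. \<exists>z. pe x (pe y z) \<in> R)" unfolding Pi02_def by blast
  define Stg where "Stg x j w \<longleftrightarrow> (\<forall>y<Suc j. \<exists>z<Suc w. pe x (pe y z) \<in> R)" for x j w
  define Q where "Q u n \<longleftrightarrow> p2 (p2 (p2 u)) = code (p1 u) (p1 (p2 u)) (p1 n) \<and>
      (p1 n \<le> Suc (p1 (p2 (p2 u))) \<or> Stg (p1 (p2 u)) (p1 n) (p2 n))" for u n
  have cQ: "cmp (\<lambda>v. if Q (p2 v) (p1 v) then 0 else 1)"
    unfolding Q_def Stg_def by (rule cmp_Q[OF R])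
  then obtain F where F: "\<And>v. eval F v (if Q (p2 v) (p1 v) then 0 else 1)" unfolding cmp_def by blast
  define M where "M = Mu F"
  define m0 where "m0 = enc M"
  have haltM: "(\<exists>y. eval M u y) \<longleftrightarrow> (\<exists>n. Q u n)" for u
    unfolding M_def using eval_Mu_total[OF F, of u] by (auto split: if_splits)
  define D where "D x j \<longleftrightarrow> (\<exists>w. Stg x j w)" for x j
  have Wc: "W (code m0 x i) = {z. \<exists>j. z = code m0 x j \<and> (j \<le> Suc i \<or> D x j)}" for x i
  proof -
    have "W (code m0 x i) = {z. \<exists>y. eval M (pe m0 (pe x (pe i z))) y}"
      unfolding m0_def code_prog W_def psi_def by (auto simp: eval_prog split: if_splits)
    also have "\<dots> = {z. \<exists>j. z = code m0 x j \<and> (j \<le> Suc i \<or> D x j)}"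
    proof (rule set_eqI)
      fix z
      show "z \<in> {z. \<exists>y. eval M (pe m0 (pe x (pe i z))) y} \<longleftrightarrow> z \<in> {z. \<exists>j. z = code m0 x j \<and> (j \<le> Suc i \<or> D x j)}"
      proof
        assume "z \<in> {z. \<exists>y. eval M (pe m0 (pe x (pe i z))) y}"
        then obtain n where "Q (pe m0 (pe x (pe i z))) n" using haltM by blast
        then show "z \<in> {z. \<exists>j. z = code m0 x j \<and> (j \<le> Suc i \<or> D x j)}"
          unfolding Q_def D_def by auto
      next
        assume "z \<in> {z. \<exists>j. z = code m0 x j \<and> (j \<le> Suc i \<or> D x j)}"
        then obtain j where j: "z = code m0 x j" "j \<le> Suc i \<or> D x j" by blast
        then obtain w where "j \<le> Suc i \<or> Stg x j w" unfolding D_def by blast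
        then have "Q (pe m0 (pe x (pe i z))) (pe j w)" unfolding Q_def using j by simp
        then show "z \<in> {z. \<exists>y. eval M (pe m0 (pe x (pe i z))) y}" using haltM by blast
      qed
    qed
    finally show ?thesis .
  qed
  have inA: "D x j" if "x \<in> A" for x j
  proof -
    have all: "\<forall>y. \<exists>z. pe x (pe y z) \<in> R" using A[of x] that by simp
    have "\<exists>w. \<forall>y<Suc j. \<exists>z<Suc w. pe x (pe y z) \<in> R"
    proof (induction j)
      case 0 then obtain z where "pe x (pe 0 z) \<in> R" using all by blast
      then show ?case by (intro exI[of _ z]) (auto simp: less_Suc_eq)
    next
      case (Suc j)
      then obtain w where w: "\<forall>y<Suc j. \<exists>z<Suc w. pe x (pe y z) \<in> R" by blast
      obtain z where z: "pe x (pe (Suc j) z) \<in> R" using all by blast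
      have "\<forall>y<Suc (Suc j). \<exists>z'<Suc (max w z). pe x (pe y z') \<in> R"
      proof (intro allI impI)
        fix y assume y: "y < Suc (Suc j)"
        show "\<exists>z'<Suc (max w z). pe x (pe y z') \<in> R"
        proof (cases "y < Suc j")
          case True
          then obtain z' where "z' < Suc w" "pe x (pe y z') \<in> R" using w by blast
          then show ?thesis by (intro exI[of _ z']) auto
        next
          case False
          then have "y = Suc j" using y by simp
          then show ?thesis using z by (intro exI[of _ z]) auto
        qed
      qed
      then show ?case by blast
    qed
    then show ?thesis unfolding D_def Stg_def by blast
  qed
  have notA: "\<exists>y0. \<forall>j. D x j \<longrightarrow> j < y0" if nA: "x \<notin> A" for x
  proof -
    have "\<not> (\<forall>y. \<exists>z. pe x (pe y z) \<in> R)" 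
    proof
      assume h: "\<forall>y. \<exists>z. pe x (pe y z) \<in> R"
      have "x \<in> A" by (rule iffD2[OF A[of x] h])
      with nA show False by contradiction
    qed
    then obtain y0 where y0: "\<And>z. pe x (pe y0 z) \<notin> R" by blast
    have "j < y0" if Dj: "D x j" for j
    proof (rule ccontr)
      assume "\<not> j < y0"
      then have lt: "y0 < Suc j" by simp
      from Dj obtain w where "Stg x j w" unfolding D_def by blast
      then have "\<forall>y<Suc j. \<exists>z<Suc w. pe x (pe y z) \<in> R" unfolding Stg_def .
      then obtain z where "pe x (pe y0 z) \<in> R" using lt by blast
      with y0 show False by blast
    qed
    then show ?thesis by blast
  qed
  define f where "f x = code m0 x 0" for x
  have tcf: "total_computable f"
    unfolding comp_tc[symmetric] f_def code_def by (intro cr)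
  have "x \<in> A \<longleftrightarrow> f x \<in> {e. self_constructing (W e)}" for x
  proof (cases "x \<in> A")
    case True
    then have Wall: "W (code m0 x i) = range (code m0 x)" for i
      unfolding Wc using inA[OF True] by auto
    have "self_constructing (W (f x))"
      unfolding f_def by (subst sc_iff) (auto simp: Wall)
    then show ?thesis using True by simp
  next
    case False
    obtain y0 where y0: "\<forall>j. D x j \<longrightarrow> j < y0" using notA[OF False] by blast
    have "\<not> self_constructing (W (f x))"
    proof
      assume sc: "self_constructing (W (f x))"
      have all: "code m0 x n \<in> W (f x)" for n
      proof (induction n)
        case 0 then show ?case unfolding f_def Wc by auto
      next
        case (Suc n)
        then have "W (code m0 x n) = W (f x)" using sc sc_iff by blast
        moreover have "code m0 x (Suc n) \<in> W (code m0 x n)" unfolding Wc by auto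
        ultimately show ?case by simp
      qed
      from all[of "y0 + 2"] obtain j where "code m0 x (y0 + 2) = code m0 x j" "j \<le> 1 \<or> D x j"
        unfolding f_def Wc by auto
      then show False using code_inj y0 by fastforce
    qed
    then show ?thesis using False by simp
  qed
  then show ?thesis unfolding m_reducible_def using tcf by blast
qed

theorem mainTheorem8:
  defines "S \<equiv> {e. self_constructing (W e)}"
  shows "Pi02 S \<and> (\<forall>A. Pi02 A \<longrightarrow> m_reducible A S) \<and> m_reducible Tot S"
  unfolding S_def using Pi02_S hard Pi02_Tot by blast

end
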